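(* Let $d\ge1$, let $X$ be a lazy simple random walk on $\mathbb{Z}^d$ started at $0$, and let $(D_s)_{s\ge0}$ be subsets of $\mathbb{Z}^d$ symmetric about the origin, i.e. $D_s=-D_s$ for all $s$. If $\sigma$ is a reflection of $\mathbb{Z}^d$ (with specified half-spaces $H^+,H^-$), then for all $t\ge0$, \[ \mathbb{E}\Big[\mathrm{vol}\Big(\bigcup_{s=0}^t(X_s+D_s)\Big)\Big]\ \ge\ \mathbb{E}\Big[\mathrm{vol}\Big(\bigcup_{s=0}^t(X_s+D_s^\sigma)\Big)\Big]. \]
   Context: $\mathbb{Z}^d$ carries the nearest-neighbour graph ($\ell^1$) distance. A reflection of a metric space $(M,d)$ is an isometry $\sigma:M\to M$ together with a decomposition $M=H^0\sqcup H^+\sqcup H^-$ such that $\sigma^2x=x$ for all $x$, $H^0$ is the set of fixed points of $\sigma$, $\sigma H^+=H^-$, and $d(x,y)<d(x,\sigma y)$ for all $x,y\in H^+$. The two-point rearrangement $A^\sigma$ of $A\subseteq M$ is defined by $A^\sigma\cap H^+=(A\cup\sigma A)\cap H^+$, $A^\sigma\cap H^-=(A\cap\sigma A)\cap H^-$, $A^\sigma\cap H^0=A\cap H^0$. The lazy simple random walk stays put with probability $1/2$ and otherwise moves from $x$ to $x\pm e_i$, each with probability $1/(4d)$. $\mathrm{vol}(S)$ is the cardinality of $S$ and $x+S=\{x+y:y\in S\}$. *)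

theory Defs
  imports "HOL-Probability.Probability"
begin

text \<open>The lattice Z^d is modelled as int ^ 'd for a finite index type 'd (d = CARD('d) \<ge> 1).\<close>

definition l1dist :: "int ^ 'd::finite \<Rightarrow> int ^ 'd \<Rightarrow> int" where
  "l1dist x y = (\<Sum>i\<in>UNIV. \<bar>x $ i - y $ i\<bar>)"

definition is_reflection ::
  "(int ^ 'd::finite \<Rightarrow> int ^ 'd) \<Rightarrow> (int ^ 'd) set \<Rightarrow> (int ^ 'd) set \<Rightarrow> (int ^ 'd) set \<Rightarrow> bool" where
  "is_reflection \<sigma> H0 Hp Hm \<longleftrightarrow>
     (\<forall>x y. l1dist (\<sigma> x) (\<sigma> y) = l1dist x y) \<and>
     (\<forall>x. \<sigma> (\<sigma> x) = x) \<and>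
     H0 \<union> Hp \<union> Hm = UNIV \<and> H0 \<inter> Hp = {} \<and> H0 \<inter> Hm = {} \<and> Hp \<inter> Hm = {} \<and>
     H0 = {x. \<sigma> x = x} \<and>
     \<sigma> ` Hp = Hm \<and>
     (\<forall>x\<in>Hp. \<forall>y\<in>Hp. l1dist x y < l1dist x (\<sigma> y))"

definition two_point ::
  "(int ^ 'd::finite \<Rightarrow> int ^ 'd) \<Rightarrow> (int ^ 'd) set \<Rightarrow> (int ^ 'd) set \<Rightarrow> (int ^ 'd) set \<Rightarrow> (int ^ 'd) set \<Rightarrow> (int ^ 'd) set" where
  "two_point \<sigma> H0 Hp Hm A =
     ((A \<union> \<sigma> ` A) \<inter> Hp) \<union> ((A \<inter> \<sigma> ` A) \<inter> Hm) \<union> (A \<inter> H0)"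

definition vol :: "'a set \<Rightarrow> ennreal" where
  "vol S = emeasure (count_space UNIV) S"

definition lazy_step :: "(int ^ 'd::finite) pmf" where
  "lazy_step = do {
     b \<leftarrow> bernoulli_pmf (1/2);
     if b then return_pmf 0 else do {
       i \<leftarrow> pmf_of_set (UNIV :: 'd set);
       sg \<leftarrow> pmf_of_set {1, -1 :: int};
       return_pmf (\<chi> j. if j = i then sg else 0)
     }
   }"

text \<open>Law of the path (X_0, ..., X_n) of the lazy SRW started at 0
  (values at times > n are 0 and irrelevant).\<close>
primrec lazy_walk :: "nat \<Rightarrow> (nat \<Rightarrow> int ^ 'd::finite) pmf" where
  "lazy_walk 0 = return_pmf (\<lambda>_. 0)"
| "lazy_walk (Suc n) = do {
     X \<leftarrow> lazy_walk n;
     y \<leftarrow> lazy_step;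
     return_pmf (X (Suc n := X n + y))
   }"

end

theory Submission
  imports Defs
begin



definition ev :: "'d::finite \<Rightarrow> int \<Rightarrow> int ^ 'd" where
  "ev i sg = (\<chi> j. if j = i then sg else 0)"

lemma l1dist_sym: "l1dist x y = l1dist y x"
  unfolding l1dist_def by (intro sum.cong) auto

lemma l1dist_nonneg: "l1dist x y \<ge> 0"
  unfolding l1dist_def by (intro sum_nonneg) auto

lemma l1dist_minus0: "l1dist (x - y) 0 = l1dist x y"
  unfolding l1dist_def by simp

lemma l1dist_ev: "sg \<in> {1,-1} \<Longrightarrow> l1dist (ev i sg) 0 = 1"
proof -
  assume "sg \<in> {1,-1}"
  then have "(\<Sum>j\<in>UNIV. \<bar>(if j = i then sg else 0)\<bar>) = (\<Sum>j\<in>UNIV. if j = i then 1 else 0)"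
    by (intro sum.cong) auto
  then have "(\<Sum>j\<in>UNIV. \<bar>(if j = i then sg else 0)\<bar>) = 1"
    by simp
  then show ?thesis unfolding l1dist_def ev_def by simp
qed

lemma l1dist_one:
  fixes v :: "int ^ 'd::finite"
  assumes "l1dist v 0 = 1"
  shows "\<exists>i. \<bar>v $ i\<bar> = 1 \<and> v = ev i (v $ i)"
proof -
  have s: "(\<Sum>j\<in>UNIV. \<bar>v $ j\<bar>) = 1" using assms unfolding l1dist_def by simp
  have "\<exists>i. v $ i \<noteq> 0"
  proof (rule ccontr)
    assume "\<not> ?thesis" then have "(\<Sum>j\<in>UNIV. \<bar>v $ j\<bar>) = 0" by simp
    with s show False by simp
  qed
  then obtain i where i: "v $ i \<noteq> 0" by blast
  have split: "(\<Sum>j\<in>UNIV. \<bar>v $ j\<bar>) = \<bar>v $ i\<bar> + (\<Sum>j\<in>UNIV - {i}. \<bar>v $ j\<bar>)"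
    by (simp add: sum.remove)
  have r: "(\<Sum>j\<in>UNIV - {i}. \<bar>v $ j\<bar>) \<ge> 0" by (intro sum_nonneg) auto
  from i have "\<bar>v $ i\<bar> \<ge> 1" by auto
  with s split r have vi: "\<bar>v $ i\<bar> = 1" and r0: "(\<Sum>j\<in>UNIV - {i}. \<bar>v $ j\<bar>) = 0" by linarith+
  from r0 have "\<forall>j\<in>UNIV - {i}. \<bar>v $ j\<bar> = 0"
    by (subst (asm) sum_nonneg_eq_0_iff) auto
  then have "v = ev i (v $ i)" unfolding ev_def by (auto simp: vec_eq_iff)
  with vi show ?thesis by blast
qed

lemma ev_eq_iff:
  assumes "sg \<noteq> 0" shows "ev i sg = ev j sg' \<longleftrightarrow> i = j \<and> sg = sg'"
proof
  assume eq: "ev i sg = ev j sg'"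
  have "(ev i sg) $ i = (ev j sg') $ i" using eq by simp
  then have "sg = (if i = j then sg' else 0)" by (simp add: ev_def)
  with assms show "i = j \<and> sg = sg'" by (auto split: if_splits)
qed simp

lemma ev_count:
  fixes v :: "int ^ 'd::finite"
  shows "(\<Sum>i\<in>UNIV. \<Sum>sg\<in>{1,-1::int}. indicator {ev i sg} v :: real) = (if l1dist v 0 = 1 then 1 else 0)"
proof (cases "l1dist v 0 = 1")
  case True
  then obtain i0 where i0: "\<bar>v $ i0\<bar> = 1" "v = ev i0 (v $ i0)" using l1dist_one by blast
  define c where "c = v $ i0"
  have c: "c = 1 \<or> c = -1" using i0(1) unfolding c_def by linarith
  have v: "v = ev i0 c" using i0(2) unfolding c_def .
  have "(\<Sum>i\<in>UNIV. \<Sum>sg\<in>{1,-1::int}. indicator {ev i sg} v :: real)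
      = (\<Sum>i\<in>UNIV. \<Sum>sg\<in>{1,-1::int}. if i = i0 \<and> sg = c then 1 else 0)"
  proof (intro sum.cong refl)
    fix i sg
    have "c \<noteq> 0" using c by auto
    then have "(ev i0 c = ev i sg) = (i0 = i \<and> c = sg)" by (rule ev_eq_iff)
    then show "indicator {ev i sg} v = (if i = i0 \<and> sg = c then 1 else (0::real))"
      unfolding v indicator_def by auto
  qed
  also have "\<dots> = (\<Sum>i\<in>UNIV. if i = i0 then 1 else 0)"
  proof (intro sum.cong refl)
    fix i
    show "(\<Sum>sg\<in>{1,-1::int}. if i = i0 \<and> sg = c then 1 else 0) = (if i = i0 then 1 else (0::real))"
      using c by (cases "i = i0") auto
  qed
  also have "\<dots> = 1" by simp
  finally show ?thesis using True by simp
next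
  case False
  have "v \<noteq> ev i sg" if "sg \<in> {1,-1}" for i sg
  proof
    assume "v = ev i sg"
    then have "l1dist v 0 = 1" using l1dist_ev[OF that] by simp
    with False show False by simp
  qed
  then have "(\<Sum>i\<in>UNIV. \<Sum>sg\<in>{1,-1::int}. indicator {ev i sg} v :: real) = 0"
    by (intro sum.neutral) (auto simp: indicator_def)
  then show ?thesis using False by simp
qed

lemma int_pos: "finite S \<Longrightarrow> S \<noteq> {} \<Longrightarrow> measure_pmf.expectation (pmf_of_set S) f = sum f S / card S"
  by (rule integral_pmf_of_set)

lemma lazy_step_ev:
  "(lazy_step :: (int^'d::finite) pmf) = bernoulli_pmf (1/2) \<bind> (\<lambda>b. if b then return_pmf 0 else
      pmf_of_set UNIV \<bind> (\<lambda>i. pmf_of_set {1, -1::int} \<bind> (\<lambda>sg. return_pmf (ev i sg))))"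
  unfolding lazy_step_def ev_def ..

lemma pmf_lazy_step:
  "pmf (lazy_step :: (int^'d::finite) pmf) v =
     (if v = 0 then 1/2 else if l1dist v 0 = 1 then 1 / (4 * real CARD('d)) else 0)"
proof -
  have inner: "pmf (pmf_of_set {1, -1::int} \<bind> (\<lambda>sg. return_pmf (ev i sg))) v
      = (\<Sum>sg\<in>{1,-1::int}. indicator {ev i sg} v) / 2" for i :: 'd
  proof -
    have "pmf (pmf_of_set {1, -1::int} \<bind> (\<lambda>sg. return_pmf (ev i sg))) v
        = (\<Sum>sg\<in>{1,-1::int}. pmf (return_pmf (ev i sg)) v) / card {1,-1::int}"
      by (subst pmf_bind, subst int_pos) auto
    also have "\<dots> = (\<Sum>sg\<in>{1,-1::int}. indicator {ev i sg} v) / 2"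
      by (simp add: indicator_def eq_commute)
    finally show ?thesis .
  qed
  have outer: "pmf (pmf_of_set (UNIV::'d set) \<bind> (\<lambda>i. pmf_of_set {1, -1::int} \<bind> (\<lambda>sg. return_pmf (ev i sg)))) v
      = (\<Sum>i\<in>UNIV. (\<Sum>sg\<in>{1,-1::int}. indicator {ev i sg} v) / 2) / real CARD('d)"
    by (subst pmf_bind, subst int_pos) (auto simp: inner)
  have "pmf (lazy_step :: (int^'d::finite) pmf) v =
      indicator {v} 0 * (1/2) + pmf (pmf_of_set (UNIV::'d set) \<bind> (\<lambda>i. pmf_of_set {1, -1::int} \<bind> (\<lambda>sg. return_pmf (ev i sg)))) v * (1 - 1/2)"
    unfolding lazy_step_ev
    by (subst pmf_bind, subst integral_bernoulli_pmf) simp_all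
  also have "\<dots> = indicator {v} 0 * (1/2) + (\<Sum>i\<in>UNIV. \<Sum>sg\<in>{1,-1::int}. indicator {ev i sg} v) / (4 * real CARD('d))"
    unfolding outer by (simp add: sum_divide_distrib[symmetric])
  also have "\<dots> = (if v = 0 then 1/2 else if l1dist v 0 = 1 then 1 / (4 * real CARD('d)) else 0)"
    unfolding ev_count by (auto simp: l1dist_def)
  finally show ?thesis .
qed




definition kap :: "int \<Rightarrow> real" where
  "kap n = (if n = 0 then 1/2 else if n = 1 then 1 / (4 * real CARD('d::finite)) else 0)"

lemma l1dist_0_iff: "l1dist (v::int^'d::finite) 0 = 0 \<longleftrightarrow> v = 0"
proof
  assume "l1dist v 0 = 0"
  then have "(\<Sum>j\<in>UNIV. \<bar>v $ j\<bar>) = 0" by (simp add: l1dist_def)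
  then have "\<forall>j\<in>UNIV. \<bar>v $ j\<bar> = 0" by (subst (asm) sum_nonneg_eq_0_iff) auto
  then show "v = 0" by (auto simp: vec_eq_iff)
qed (simp add: l1dist_def)

lemma pmf_lazy_step_kap:
  "pmf (lazy_step :: (int^'d::finite) pmf) (x - y) = kap TYPE('d) (l1dist x y)"
proof -
  have e: "x - y = 0 \<longleftrightarrow> l1dist x y = 0" using l1dist_0_iff[of "x-y"] l1dist_minus0[of x y] by simp
  show ?thesis unfolding pmf_lazy_step kap_def l1dist_minus0 e by simp
qed

definition kern :: "int^'d::finite \<Rightarrow> int^'d \<Rightarrow> ennreal" where
  "kern x y = ennreal (pmf lazy_step (x - y))"

lemma kern_kap: "kern x y = ennreal (kap TYPE('d::finite) (l1dist x (y::int^'d)))"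
  unfolding kern_def pmf_lazy_step_kap ..

lemma kap_nonneg: "kap TYPE('d::finite) n \<ge> 0"
  by (simp add: kap_def)

lemma kap_le_half: "kap TYPE('d::finite) n \<le> 1/2"
proof -
  have c: "real CARD('d) \<ge> 1" using zero_less_card_finite[where 'a='d] by linarith
  have "1 / (4 * real CARD('d)) \<le> 1/2"
    by (rule divide_left_mono; use c in linarith)
  then show ?thesis by (simp add: kap_def)
qed

lemma kap_mono: "0 \<le> a \<Longrightarrow> a < b \<Longrightarrow> kap TYPE('d::finite) b \<le> kap TYPE('d) a"
proof -
  assume a: "0 \<le> a" "a < b"
  show ?thesis
  proof (cases "a = 0")
    case True
    then show ?thesis using kap_le_half[of b] by (simp add: kap_def)
  next
    case False
    then have "b \<noteq> 0" "b \<noteq> 1" using a by auto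
    then have "kap TYPE('d) b = 0" by (simp add: kap_def)
    then show ?thesis using kap_nonneg[of a] by simp
  qed
qed

definition Pstep :: "(int^'d::finite \<Rightarrow> ennreal) \<Rightarrow> int^'d \<Rightarrow> ennreal" where
  "Pstep h w = (\<integral>\<^sup>+ y. h (w - y) \<partial>measure_pmf lazy_step)"

lemma Pstep_eq: "Pstep h w = (\<integral>\<^sup>+ y. kern w y * h y \<partial>count_space UNIV)"
proof -
  have "Pstep h w = (\<integral>\<^sup>+ v. ennreal (pmf lazy_step v) * h (w - v) \<partial>count_space UNIV)"
    unfolding Pstep_def nn_integral_measure_pmf ..
  also have "\<dots> = (\<integral>\<^sup>+ y. ennreal (pmf lazy_step (w - y)) * h (w - (w - y)) \<partial>count_space UNIV)"
    by (rule nn_integral_bij_count_space[symmetric, where g = "\<lambda>y. w - y"])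
       (rule bij_betwI[where g = "\<lambda>y. w - y"]; auto)
  finally show ?thesis by (simp add: kern_def)
qed

locale refl =
  fixes \<sigma> :: "int^'d::finite \<Rightarrow> int^'d" and H0 Hp Hm :: "(int^'d) set"
  assumes r: "is_reflection \<sigma> H0 Hp Hm"
begin

lemma rf1: "\<forall>x y. l1dist (\<sigma> x) (\<sigma> y) = l1dist x y"
  using r unfolding is_reflection_def by (elim conjE) assumption

lemma rf2: "\<forall>x. \<sigma> (\<sigma> x) = x"
  using r unfolding is_reflection_def by (elim conjE) assumption

lemma rf3: "H0 \<union> Hp \<union> Hm = UNIV"
  using r unfolding is_reflection_def by (elim conjE) assumption

lemma rf4: "H0 \<inter> Hp = {}"
  using r unfolding is_reflection_def by (elim conjE) assumption

lemma rf5: "H0 \<inter> Hm = {}"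
  using r unfolding is_reflection_def by (elim conjE) assumption

lemma rf6: "Hp \<inter> Hm = {}"
  using r unfolding is_reflection_def by (elim conjE) assumption

lemma rf7: "H0 = {x. \<sigma> x = x}"
  using r unfolding is_reflection_def by (elim conjE) assumption

lemma rf8: "\<sigma> ` Hp = Hm"
  using r unfolding is_reflection_def by (elim conjE) assumption

lemma rf9: "\<forall>x\<in>Hp. \<forall>y\<in>Hp. l1dist x y < l1dist x (\<sigma> y)"
  using r unfolding is_reflection_def by (elim conjE) assumption

lemmas rf = rf1 rf2 rf3 rf4 rf5 rf6 rf7 rf8 rf9

lemma iso: "l1dist (\<sigma> x) (\<sigma> y) = l1dist x y" and inv[simp]: "\<sigma> (\<sigma> x) = x"
  using rf(1,2) by blast+

lemma H0_iff: "x \<in> H0 \<longleftrightarrow> \<sigma> x = x"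
  using rf(7) by blast

lemma Hp_Hm: "\<sigma> x \<in> Hp \<longleftrightarrow> x \<in> Hm"
proof
  assume "\<sigma> x \<in> Hp" then have "\<sigma> (\<sigma> x) \<in> Hm" using rf(8) by blast
  then show "x \<in> Hm" by simp
next
  assume "x \<in> Hm" then obtain p where "p \<in> Hp" "x = \<sigma> p" using rf(8) by blast
  then show "\<sigma> x \<in> Hp" by simp
qed

lemma Hm_Hp: "\<sigma> x \<in> Hm \<longleftrightarrow> x \<in> Hp"
  by (metis Hp_Hm inv)

lemma part: "x \<in> H0 \<or> x \<in> Hp \<or> x \<in> Hm"
  using rf(3) by blast

lemma disj: "x \<in> H0 \<Longrightarrow> x \<notin> Hp" "x \<in> H0 \<Longrightarrow> x \<notin> Hm" "x \<in> Hp \<Longrightarrow> x \<notin> Hm"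
  using rf(4,5,6) by blast+

lemma dist_Hm: "x \<in> Hm \<Longrightarrow> y \<in> Hm \<Longrightarrow> l1dist x y < l1dist x (\<sigma> y)"
proof -
  assume "x \<in> Hm" "y \<in> Hm"
  then have "\<sigma> x \<in> Hp" "\<sigma> y \<in> Hp" using Hp_Hm by auto
  then have "l1dist (\<sigma> x) (\<sigma> y) < l1dist (\<sigma> x) (\<sigma> (\<sigma> y))"
    using rf(9) by blast
  then show ?thesis by (metis iso inv)
qed

lemma kern_iso: "kern (\<sigma> x) (\<sigma> y) = kern x y"
  unfolding kern_kap iso ..

lemma kern_Hm: "x \<in> Hm \<Longrightarrow> y \<in> Hm \<Longrightarrow> kern x (\<sigma> y) \<le> kern x y"
  unfolding kern_kap by (intro ennreal_leI kap_mono l1dist_nonneg dist_Hm)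

lemma bij_sigma: "bij_betw \<sigma> UNIV UNIV"
  by (rule bij_betwI[where g = \<sigma>]) auto

lemma split_sum:
  "(\<integral>\<^sup>+ y. h y \<partial>count_space UNIV) =
   (\<integral>\<^sup>+ y. (indicator H0 y * h y + indicator Hm y * (h y + h (\<sigma> y))) \<partial>count_space UNIV)"
proof -
  have p: "h y = (indicator H0 y * h y + indicator Hm y * h y) + indicator Hp y * h y" for y
  proof -
    consider "y \<in> H0" | "y \<in> Hp" | "y \<in> Hm" using part by blast
    then show ?thesis
    proof cases
      case 1 then have "y \<notin> Hp" "y \<notin> Hm" using disj by auto
      then show ?thesis using 1 by simp
    next
      case 2 then have "y \<notin> H0" "y \<notin> Hm" using disj by auto
      then show ?thesis using 2 by simp
    next
      case 3 then have "y \<notin> H0" "y \<notin> Hp" using disj by auto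
      then show ?thesis using 3 by simp
    qed
  qed
  have q: "(\<integral>\<^sup>+ y. indicator Hp y * h y \<partial>count_space UNIV) = (\<integral>\<^sup>+ y. indicator Hm y * h (\<sigma> y) \<partial>count_space UNIV)"
  proof -
    have "(\<integral>\<^sup>+ y. indicator Hm y * h (\<sigma> y) \<partial>count_space UNIV) = (\<integral>\<^sup>+ y. indicator Hp (\<sigma> y) * h (\<sigma> y) \<partial>count_space UNIV)"
      by (intro nn_integral_cong) (simp only: indicator_def Hp_Hm)
    also have "\<dots> = (\<integral>\<^sup>+ y. indicator Hp y * h y \<partial>count_space UNIV)"
      by (rule nn_integral_bij_count_space[OF bij_sigma])
    finally show ?thesis by (rule sym)
  qed
  have "(\<integral>\<^sup>+ y. h y \<partial>count_space UNIV) = (\<integral>\<^sup>+ y. (indicator H0 y * h y + indicator Hm y * h y) + indicator Hp y * h y \<partial>count_space UNIV)"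
    by (rule nn_integral_cong) (rule p)
  also have "\<dots> = (\<integral>\<^sup>+ y. (indicator H0 y * h y + indicator Hm y * h y) \<partial>count_space UNIV) + (\<integral>\<^sup>+ y. indicator Hp y * h y \<partial>count_space UNIV)"
    by (rule nn_integral_add) simp_all
  also have "\<dots> = (\<integral>\<^sup>+ y. (indicator H0 y * h y + indicator Hm y * h y) \<partial>count_space UNIV) + (\<integral>\<^sup>+ y. indicator Hm y * h (\<sigma> y) \<partial>count_space UNIV)"
    unfolding q ..
  also have "\<dots> = (\<integral>\<^sup>+ y. (indicator H0 y * h y + indicator Hm y * h y) + indicator Hm y * h (\<sigma> y) \<partial>count_space UNIV)"
    by (rule nn_integral_add[symmetric]) simp_all
  also have "\<dots> = (\<integral>\<^sup>+ y. (indicator H0 y * h y + indicator Hm y * (h y + h (\<sigma> y))) \<partial>count_space UNIV)"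
    by (intro nn_integral_cong) (simp only: distrib_left add.assoc)
  finally show ?thesis .
qed

end




lemma pair_ineq:
  fixes a b Fa Fb Ga Gb :: ennreal
  assumes "b \<le> a" "Fa \<le> Ga" "Fb \<le> Ga" "Fa + Fb \<le> Ga + Gb"
  shows "a * Fa + b * Fb \<le> a * Ga + b * Gb" and "b * Fa + a * Fb \<le> a * Ga + b * Gb"
proof -
  obtain c where c: "a = b + c" using assms(1) le_iff_add by blast
  have G: "a * Ga + b * Gb = c * Ga + b * (Ga + Gb)" unfolding c by (simp add: algebra_simps)
  have "a * Fa + b * Fb = c * Fa + b * (Fa + Fb)" unfolding c by (simp add: algebra_simps)
  also have "\<dots> \<le> c * Ga + b * (Ga + Gb)"
    by (intro add_mono mult_left_mono assms) auto
  finally show "a * Fa + b * Fb \<le> a * Ga + b * Gb" unfolding G .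
  have "b * Fa + a * Fb = c * Fb + b * (Fa + Fb)" unfolding c by (simp add: algebra_simps)
  also have "\<dots> \<le> c * Ga + b * (Ga + Gb)"
    by (intro add_mono mult_left_mono assms) auto
  finally show "b * Fa + a * Fb \<le> a * Ga + b * Gb" unfolding G .
qed

lemma pair_sum:
  fixes a b Fa Fb :: ennreal
  shows "(a * Fa + b * Fb) + (b * Fa + a * Fb) = (a + b) * (Fa + Fb)"
  by (simp add: algebra_simps)

context refl
begin

definition R :: "(int^'d \<Rightarrow> ennreal) \<Rightarrow> (int^'d \<Rightarrow> ennreal) \<Rightarrow> bool" where
  "R F G \<longleftrightarrow> (\<forall>z\<in>H0. F z \<le> G z) \<and>
     (\<forall>x\<in>Hm. F x \<le> G x \<and> F (\<sigma> x) \<le> G x \<and> F x + F (\<sigma> x) \<le> G x + G (\<sigma> x))"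

lemma kern_H0_sig: "z \<in> H0 \<Longrightarrow> kern z (\<sigma> y) = kern z y"
  using kern_iso[of z y] H0_iff by simp

lemma kern_sig_H0: "y \<in> H0 \<Longrightarrow> kern (\<sigma> x) y = kern x y"
  using kern_iso[of x y] H0_iff by simp

lemma kern_sig_l: "kern (\<sigma> x) y = kern x (\<sigma> y)"
  using kern_iso[of x "\<sigma> y"] by simp

definition I :: "(int^'d \<Rightarrow> ennreal) \<Rightarrow> int^'d \<Rightarrow> int^'d \<Rightarrow> ennreal" where
  "I h w y = indicator H0 y * (kern w y * h y) + indicator Hm y * (kern w y * h y + kern w (\<sigma> y) * h (\<sigma> y))"

lemma Pstep_split: "Pstep h w = (\<integral>\<^sup>+ y. I h w y \<partial>count_space UNIV)"
  unfolding Pstep_eq I_def by (rule split_sum)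

lemma ind_cases:
  assumes "y \<in> H0 \<Longrightarrow> P" "y \<in> Hm \<Longrightarrow> y \<notin> H0 \<Longrightarrow> P" "y \<notin> H0 \<Longrightarrow> y \<notin> Hm \<Longrightarrow> P"
  shows P
  using assms by blast

lemma P_pres:
  assumes RFG: "R F G"
  shows "R (Pstep F) (Pstep G)"
proof -
  have F0: "F z \<le> G z" if "z \<in> H0" for z using RFG that unfolding R_def by blast
  have F1: "F x \<le> G x" "F (\<sigma> x) \<le> G x" "F x + F (\<sigma> x) \<le> G x + G (\<sigma> x)" if "x \<in> Hm" for x
    using RFG that unfolding R_def by blast+
  have a: "Pstep F z \<le> Pstep G z" if z: "z \<in> H0" for z
    unfolding Pstep_split
  proof (intro nn_integral_mono)
    fix y
    show "I F z y \<le> I G z y"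
    proof (rule ind_cases[of y])
      assume "y \<in> H0" then show ?thesis using disj[of y] F0[of y] by (simp add: I_def mult_left_mono)
    next
      assume y: "y \<in> Hm" "y \<notin> H0"
      have "kern z y * F y + kern z (\<sigma> y) * F (\<sigma> y) = kern z y * (F y + F (\<sigma> y))"
        using kern_H0_sig[OF z] by (simp add: distrib_left)
      also have "\<dots> \<le> kern z y * (G y + G (\<sigma> y))" by (intro mult_left_mono F1 y) simp
      also have "\<dots> = kern z y * G y + kern z (\<sigma> y) * G (\<sigma> y)"
        using kern_H0_sig[OF z] by (simp add: distrib_left)
      finally show ?thesis using y by (simp add: I_def)
    next
      assume "y \<notin> H0" "y \<notin> Hm" then show ?thesis by (simp add: I_def)
    qed
  qed
  have b: "Pstep F x \<le> Pstep G x" if x: "x \<in> Hm" for x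
    unfolding Pstep_split
  proof (intro nn_integral_mono)
    fix y
    show "I F x y \<le> I G x y"
    proof (rule ind_cases[of y])
      assume "y \<in> H0" then show ?thesis using disj[of y] F0[of y] by (simp add: I_def mult_left_mono)
    next
      assume y: "y \<in> Hm" "y \<notin> H0"
      have "kern x y * F y + kern x (\<sigma> y) * F (\<sigma> y) \<le> kern x y * G y + kern x (\<sigma> y) * G (\<sigma> y)"
        by (rule pair_ineq(1)) (use kern_Hm[OF x y(1)] F1[OF y(1)] in auto)
      then show ?thesis using y by (simp add: I_def)
    next
      assume "y \<notin> H0" "y \<notin> Hm" then show ?thesis by (simp add: I_def)
    qed
  qed
  have c: "Pstep F (\<sigma> x) \<le> Pstep G x" if x: "x \<in> Hm" for x
    unfolding Pstep_split
  proof (intro nn_integral_mono)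
    fix y
    show "I F (\<sigma> x) y \<le> I G x y"
    proof (rule ind_cases[of y])
      assume y: "y \<in> H0"
      then show ?thesis using disj[of y] F0[of y] kern_sig_H0[OF y, of x] by (simp add: I_def mult_left_mono)
    next
      assume y: "y \<in> Hm" "y \<notin> H0"
      have "kern x (\<sigma> y) * F y + kern x y * F (\<sigma> y) \<le> kern x y * G y + kern x (\<sigma> y) * G (\<sigma> y)"
        by (rule pair_ineq(2)) (use kern_Hm[OF x y(1)] F1[OF y(1)] in auto)
      moreover have "kern (\<sigma> x) y = kern x (\<sigma> y)" "kern (\<sigma> x) (\<sigma> y) = kern x y"
        using kern_sig_l kern_iso by auto
      ultimately show ?thesis using y by (simp add: I_def)
    next
      assume "y \<notin> H0" "y \<notin> Hm" then show ?thesis by (simp add: I_def)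
    qed
  qed
  have d: "Pstep F x + Pstep F (\<sigma> x) \<le> Pstep G x + Pstep G (\<sigma> x)" if x: "x \<in> Hm" for x
  proof -
    have "Pstep F x + Pstep F (\<sigma> x) = (\<integral>\<^sup>+ y. I F x y + I F (\<sigma> x) y \<partial>count_space UNIV)"
      unfolding Pstep_split by (rule nn_integral_add[symmetric]) simp_all
    also have "\<dots> \<le> (\<integral>\<^sup>+ y. I G x y + I G (\<sigma> x) y \<partial>count_space UNIV)"
    proof (intro nn_integral_mono)
      fix y
      show "I F x y + I F (\<sigma> x) y \<le> I G x y + I G (\<sigma> x) y"
      proof (rule ind_cases[of y])
        assume y: "y \<in> H0"
        then show ?thesis using disj[of y] F0[of y] by (simp add: I_def add_mono mult_left_mono)
      next
        assume y: "y \<in> Hm" "y \<notin> H0"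
        have k: "kern (\<sigma> x) y = kern x (\<sigma> y)" "kern (\<sigma> x) (\<sigma> y) = kern x y"
          using kern_sig_l kern_iso by auto
        have "(kern x y * F y + kern x (\<sigma> y) * F (\<sigma> y)) + (kern x (\<sigma> y) * F y + kern x y * F (\<sigma> y))
            = (kern x y + kern x (\<sigma> y)) * (F y + F (\<sigma> y))" by (rule pair_sum)
        also have "\<dots> \<le> (kern x y + kern x (\<sigma> y)) * (G y + G (\<sigma> y))"
          by (intro mult_left_mono F1 y) simp
        also have "\<dots> = (kern x y * G y + kern x (\<sigma> y) * G (\<sigma> y)) + (kern x (\<sigma> y) * G y + kern x y * G (\<sigma> y))"
          by (rule pair_sum[symmetric])
        finally show ?thesis using y k by (simp add: I_def)
      next
        assume "y \<notin> H0" "y \<notin> Hm" then show ?thesis by (simp add: I_def)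
      qed
    qed
    also have "\<dots> = Pstep G x + Pstep G (\<sigma> x)"
      unfolding Pstep_split by (rule nn_integral_add) simp_all
    finally show ?thesis .
  qed
  show ?thesis unfolding R_def using a b c d by blast
qed

end



primrec Back :: "nat \<Rightarrow> (nat \<Rightarrow> int^'d::finite \<Rightarrow> ennreal) \<Rightarrow> int^'d \<Rightarrow> ennreal" where
  "Back 0 f = f 0"
| "Back (Suc n) f = Back n (f(n := (\<lambda>w. f n w * Pstep (f (Suc n)) w)))"

lemma prod_atMost_split: "(\<Prod>s\<le>(n::nat). h s) = (\<Prod>s<n. h s) * (h n :: ennreal)"
proof -
  have "{..n} = insert n {..<n}" by auto
  then show ?thesis by (simp add: mult.commute)
qed

lemma walk_Back:
  "(\<integral>\<^sup>+ X. (\<Prod>s\<le>n. f s (z - X s)) \<partial>measure_pmf (lazy_walk n)) = Back n f (z :: int^'d::finite)"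
proof (induction n arbitrary: f)
  case 0
  then show ?case by simp
next
  case (Suc n)
  define f' where "f' = f(n := (\<lambda>w. f n w * Pstep (f (Suc n)) w))"
  have eq: "(\<integral>\<^sup>+ y. (\<Prod>s\<le>Suc n. f s (z - (X(Suc n := X n + y)) s)) \<partial>measure_pmf lazy_step)
      = (\<Prod>s\<le>n. f' s (z - X s))" for X :: "nat \<Rightarrow> int^'d"
  proof -
    have p: "(\<Prod>s\<le>Suc n. f s (z - (X(Suc n := X n + y)) s)) = (\<Prod>s\<le>n. f s (z - X s)) * f (Suc n) ((z - X n) - y)" for y
    proof -
      have "(\<Prod>s\<le>n. f s (z - (X(Suc n := X n + y)) s)) = (\<Prod>s\<le>n. f s (z - X s))"
        by (intro prod.cong) auto
      then show ?thesis by (simp add: prod_atMost_split[of _ "Suc n"] lessThan_Suc_atMost algebra_simps)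
    qed
    have "(\<integral>\<^sup>+ y. (\<Prod>s\<le>Suc n. f s (z - (X(Suc n := X n + y)) s)) \<partial>measure_pmf lazy_step)
        = (\<integral>\<^sup>+ y. (\<Prod>s\<le>n. f s (z - X s)) * f (Suc n) ((z - X n) - y) \<partial>measure_pmf lazy_step)"
      by (simp only: p)
    also have "\<dots> = (\<Prod>s\<le>n. f s (z - X s)) * Pstep (f (Suc n)) (z - X n)"
      unfolding Pstep_def by (rule nn_integral_cmult) simp
    also have "\<dots> = (\<Prod>s<n. f s (z - X s)) * (f n (z - X n) * Pstep (f (Suc n)) (z - X n))"
      by (simp add: prod_atMost_split mult.assoc)
    also have "\<dots> = (\<Prod>s\<le>n. f' s (z - X s))"
      unfolding prod_atMost_split f'_def by simp
    finally show ?thesis .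
  qed
  have "(\<integral>\<^sup>+ X. (\<Prod>s\<le>Suc n. f s (z - X s)) \<partial>measure_pmf (lazy_walk (Suc n)))
      = (\<integral>\<^sup>+ X. (\<integral>\<^sup>+ y. (\<Prod>s\<le>Suc n. f s (z - (X(Suc n := X n + y)) s)) \<partial>measure_pmf lazy_step) \<partial>measure_pmf (lazy_walk n))"
    by simp
  also have "\<dots> = (\<integral>\<^sup>+ X. (\<Prod>s\<le>n. f' s (z - X s)) \<partial>measure_pmf (lazy_walk n))"
    by (simp only: eq)
  also have "\<dots> = Back n f' z" by (rule Suc.IH)
  finally show ?case by (simp add: f'_def)
qed

context refl
begin

definition S :: "(int^'d \<Rightarrow> ennreal) \<Rightarrow> (int^'d \<Rightarrow> ennreal) \<Rightarrow> bool" where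
  "S c c' \<longleftrightarrow> (\<forall>z. c z = 0 \<or> c z = 1) \<and> (\<forall>z\<in>H0. c' z = c z) \<and>
     (\<forall>x\<in>Hm. c' x = max (c x) (c (\<sigma> x)) \<and> c' (\<sigma> x) = min (c x) (c (\<sigma> x)))"

lemma S_R: "S c c' \<Longrightarrow> R c c'"
  unfolding S_def R_def
proof (intro conjI ballI)
  assume s: "(\<forall>z. c z = 0 \<or> c z = 1) \<and> (\<forall>z\<in>H0. c' z = c z) \<and>
     (\<forall>x\<in>Hm. c' x = max (c x) (c (\<sigma> x)) \<and> c' (\<sigma> x) = min (c x) (c (\<sigma> x)))"
  fix x assume x: "x \<in> Hm"
  have "c x = 0 \<or> c x = 1" "c (\<sigma> x) = 0 \<or> c (\<sigma> x) = 1" using s by blast+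
  moreover have "c' x = max (c x) (c (\<sigma> x))" "c' (\<sigma> x) = min (c x) (c (\<sigma> x))" using s x by blast+
  ultimately show "c x \<le> c' x" "c (\<sigma> x) \<le> c' x" "c x + c (\<sigma> x) \<le> c' x + c' (\<sigma> x)" by auto
next
  fix z assume "(\<forall>z. c z = 0 \<or> c z = 1) \<and> (\<forall>z\<in>H0. c' z = c z) \<and>
     (\<forall>x\<in>Hm. c' x = max (c x) (c (\<sigma> x)) \<and> c' (\<sigma> x) = min (c x) (c (\<sigma> x)))" "z \<in> H0"
  then show "c z \<le> c' z" by simp
qed

lemma mult_pres:
  assumes s: "S c c'" and r: "R F G"
  shows "R (\<lambda>w. c w * F w) (\<lambda>w. c' w * G w)"
  unfolding R_def
proof (intro conjI ballI)
  fix z assume z: "z \<in> H0"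
  have "c' z = c z" "F z \<le> G z" using s r z unfolding S_def R_def by auto
  then show "c z * F z \<le> c' z * G z" by (simp add: mult_left_mono)
next
  fix x assume x: "x \<in> Hm"
  have c: "c x = 0 \<or> c x = 1" "c (\<sigma> x) = 0 \<or> c (\<sigma> x) = 1" using s unfolding S_def by blast+
  have c': "c' x = max (c x) (c (\<sigma> x))" "c' (\<sigma> x) = min (c x) (c (\<sigma> x))" using s x unfolding S_def by blast+
  have F: "F x \<le> G x" "F (\<sigma> x) \<le> G x" "F x + F (\<sigma> x) \<le> G x + G (\<sigma> x)" using r x unfolding R_def by blast+
  show "c x * F x \<le> c' x * G x" using c c' F by auto
  show "c (\<sigma> x) * F (\<sigma> x) \<le> c' x * G x" using c c' F by auto
  show "c x * F x + c (\<sigma> x) * F (\<sigma> x) \<le> c' x * G x + c' (\<sigma> x) * G (\<sigma> x)"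
    using c c' F by (auto simp: add_increasing2)
qed

lemma Back_pres:
  "(\<And>s. s < n \<Longrightarrow> S (f s) (g s)) \<Longrightarrow> R (f n) (g n) \<Longrightarrow> R (Back n f) (Back n g)"
proof (induction n arbitrary: f g)
  case 0
  then show ?case by simp
next
  case (Suc n)
  show ?case unfolding Back.simps
  proof (rule Suc.IH)
    fix s assume "s < n"
    then show "S ((f(n := \<lambda>w. f n w * Pstep (f (Suc n)) w)) s) ((g(n := \<lambda>w. g n w * Pstep (g (Suc n)) w)) s)"
      using Suc.prems(1)[of s] by simp
  next
    have "R (\<lambda>w. f n w * Pstep (f (Suc n)) w) (\<lambda>w. g n w * Pstep (g (Suc n)) w)"
      by (rule mult_pres) (use Suc.prems P_pres in auto)
    then show "R ((f(n := \<lambda>w. f n w * Pstep (f (Suc n)) w)) n) ((g(n := \<lambda>w. g n w * Pstep (g (Suc n)) w)) n)"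
      by simp
  qed
qed

end



lemma vol_eq: "vol S = (\<integral>\<^sup>+ z. indicator S z \<partial>count_space UNIV)"
  by (simp add: vol_def)

lemma mem_trans: "z \<in> (\<lambda>y. a + y) ` B \<longleftrightarrow> z - a \<in> (B :: 'a::ab_group_add set)"
proof
  assume "z \<in> (\<lambda>y. a + y) ` B" then obtain y where "y \<in> B" "z = a + y" by blast
  then show "z - a \<in> B" by simp
next
  assume "z - a \<in> B" then have "a + (z - a) \<in> (\<lambda>y. a + y) ` B" by blast
  then show "z \<in> (\<lambda>y. a + y) ` B" by simp
qed

lemma prod_ind:
  assumes "finite I"
  shows "(\<Prod>s\<in>I. indicator (- C s) z :: ennreal) = (if \<exists>s\<in>I. z \<in> C s then 0 else 1)"
proof (cases "\<exists>s\<in>I. z \<in> C s")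
  case True
  then obtain s where "s \<in> I" "z \<in> C s" by blast
  then have "(\<Prod>s\<in>I. indicator (- C s) z :: ennreal) = 0"
    by (intro prod_zero assms) (auto intro!: bexI[of _ s])
  then show ?thesis using True by simp
next
  case False
  then have "(\<Prod>s\<in>I. indicator (- C s) z :: ennreal) = 1"
    by (intro prod.neutral) auto
  then show ?thesis using False by simp
qed

lemma ind_union:
  assumes "finite I"
  shows "indicator (\<Union>s\<in>I. C s) z = 1 - (\<Prod>s\<in>I. indicator (- C s) z :: ennreal)"
  unfolding prod_ind[OF assms] by (auto simp: indicator_def)

lemma one_minus_int:
  assumes h: "\<And>x. h x \<le> (1::ennreal)"
  shows "(\<integral>\<^sup>+ x. (1 - h x) \<partial>measure_pmf M) = 1 - (\<integral>\<^sup>+ x. h x \<partial>measure_pmf M)"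
proof -
  have "(\<integral>\<^sup>+ x. (1 - h x) \<partial>measure_pmf M) + (\<integral>\<^sup>+ x. h x \<partial>measure_pmf M)
      = (\<integral>\<^sup>+ x. (1 - h x) + h x \<partial>measure_pmf M)"
    by (rule nn_integral_add[symmetric]) simp_all
  also have "\<dots> = (\<integral>\<^sup>+ x. 1 \<partial>measure_pmf M)"
    using h by (simp add: diff_add_cancel_ennreal)
  also have "\<dots> = 1" by simp
  finally have e: "(\<integral>\<^sup>+ x. (1 - h x) \<partial>measure_pmf M) + (\<integral>\<^sup>+ x. h x \<partial>measure_pmf M) = 1" .
  have "(\<integral>\<^sup>+ x. h x \<partial>measure_pmf M) \<le> (\<integral>\<^sup>+ x. 1 \<partial>measure_pmf M)"
    using h by (intro nn_integral_mono) auto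
  then have "(\<integral>\<^sup>+ x. h x \<partial>measure_pmf M) \<noteq> top" by (auto simp: top_unique)
  then show ?thesis by (metis ennreal_add_diff_cancel_right e)
qed

lemma ennreal_pair:
  fixes a b c d :: ennreal
  assumes "a \<le> 1" "b \<le> 1" "c \<le> 1" "d \<le> 1" "a + b \<le> c + d"
  shows "(1 - c) + (1 - d) \<le> (1 - a) + (1 - b)"
proof -
  obtain a' b' c' d' where r: "a = ennreal a'" "b = ennreal b'" "c = ennreal c'" "d = ennreal d'"
    "0 \<le> a'" "0 \<le> b'" "0 \<le> c'" "0 \<le> d'"
    using assms by (metis ennreal_cases ennreal_one_neq_top top_unique)
  then have le: "a' \<le> 1" "b' \<le> 1" "c' \<le> 1" "d' \<le> 1" "a' + b' \<le> c' + d'"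
    using assms by (simp_all add: ennreal_plus[symmetric] del: ennreal_plus)
  have m: "1 - ennreal x = ennreal (1 - x)" if "0 \<le> x" for x using ennreal_minus[of x 1] that by simp
  have "(1 - c) + (1 - d) = ennreal ((1 - c') + (1 - d'))"
    unfolding r(3,4) m[OF r(7)] m[OF r(8)] by (rule ennreal_plus[symmetric]) (use le in linarith)+
  also have "\<dots> \<le> ennreal ((1 - a') + (1 - b'))" using le by (intro ennreal_leI) linarith
  also have "\<dots> = (1 - a) + (1 - b)"
    unfolding r(1,2) m[OF r(5)] m[OF r(6)] by (rule ennreal_plus) (use le in linarith)+
  finally show ?thesis .
qed




lemma prod_le1_enn:
  assumes "finite I" "\<And>i. h i \<le> (1::ennreal)"
  shows "(\<Prod>i\<in>I. h i) \<le> 1"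
  using assms(1)
proof (induction I rule: finite_induct)
  case empty then show ?case by simp
next
  case (insert x F)
  have "h x * prod h F \<le> 1 * 1"
    by (rule mult_mono) (use assms(2) insert.IH in auto)
  then show ?case using insert.hyps by simp
qed

lemma Back_le1:
  assumes "\<And>s w. f s w \<le> (1::ennreal)"
  shows "Back n f (z::int^'d::finite) \<le> 1"
proof -
  have "Back n f z = (\<integral>\<^sup>+ X. (\<Prod>s\<le>n. f s (z - X s)) \<partial>measure_pmf (lazy_walk n))"
    by (rule walk_Back[symmetric])
  also have "\<dots> \<le> (\<integral>\<^sup>+ X. 1 \<partial>measure_pmf (lazy_walk n :: (nat \<Rightarrow> int^'d) pmf))"
  proof (rule nn_integral_mono)
    fix X :: "nat \<Rightarrow> int^'d"
    show "(\<Prod>s\<le>n. f s (z - X s)) \<le> 1" by (rule prod_le1_enn) (simp_all add: assms)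
  qed
  also have "\<dots> = 1" by simp
  finally show ?thesis .
qed

lemma expect_eq:
  fixes A :: "nat \<Rightarrow> (int^'d::finite) set"
  shows "(\<integral>\<^sup>+ X. vol (\<Union>s\<le>t. (\<lambda>y. X s + y) ` A s) \<partial>measure_pmf (lazy_walk t))
    = (\<integral>\<^sup>+ z. (1 - Back t (\<lambda>s w. indicator (- A s) w) z) \<partial>count_space UNIV)"
proof -
  define f :: "nat \<Rightarrow> int^'d \<Rightarrow> ennreal" where "f = (\<lambda>s w. indicator (- A s) w)"
  have pt: "(\<integral>\<^sup>+ X. indicator (\<Union>s\<le>t. (\<lambda>y. X s + y) ` A s) z \<partial>measure_pmf (lazy_walk t))
      = 1 - Back t f z" for z
  proof -
    have i: "indicator (\<Union>s\<le>t. (\<lambda>y. X s + y) ` A s) z = 1 - (\<Prod>s\<le>t. f s (z - X s))"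
      and le: "(\<Prod>s\<le>t. f s (z - X s)) \<le> 1" for X :: "nat \<Rightarrow> int^'d"
    proof -
      have c: "(\<Prod>s\<le>t. indicator (- ((\<lambda>y. X s + y) ` A s)) z :: ennreal) = (\<Prod>s\<le>t. f s (z - X s))"
        by (intro prod.cong) (auto simp: f_def indicator_def mem_trans)
      show "indicator (\<Union>s\<le>t. (\<lambda>y. X s + y) ` A s) z = 1 - (\<Prod>s\<le>t. f s (z - X s))"
        using ind_union[of "{..t}" "\<lambda>s. (\<lambda>y. X s + y) ` A s" z] c by simp
      show "(\<Prod>s\<le>t. f s (z - X s)) \<le> 1"
        unfolding c[symmetric] prod_ind[OF finite_atMost] by simp
    qed
    have "(\<integral>\<^sup>+ X. indicator (\<Union>s\<le>t. (\<lambda>y. X s + y) ` A s) z \<partial>measure_pmf (lazy_walk t))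
        = (\<integral>\<^sup>+ X. (1 - (\<Prod>s\<le>t. f s (z - X s))) \<partial>measure_pmf (lazy_walk t))"
      by (simp only: i)
    also have "\<dots> = 1 - (\<integral>\<^sup>+ X. (\<Prod>s\<le>t. f s (z - X s)) \<partial>measure_pmf (lazy_walk t))"
      by (rule one_minus_int) (rule le)
    also have "\<dots> = 1 - Back t f z" by (simp only: walk_Back)
    finally show ?thesis .
  qed
  have "(\<integral>\<^sup>+ X. vol (\<Union>s\<le>t. (\<lambda>y. X s + y) ` A s) \<partial>measure_pmf (lazy_walk t))
      = (\<integral>\<^sup>+ X. (\<integral>\<^sup>+ z. indicator (\<Union>s\<le>t. (\<lambda>y. X s + y) ` A s) z \<partial>count_space UNIV) \<partial>measure_pmf (lazy_walk t))"
    by (simp only: vol_eq)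
  also have "\<dots> = (\<integral>\<^sup>+ z. (\<integral>\<^sup>+ X. indicator (\<Union>s\<le>t. (\<lambda>y. X s + y) ` A s) z \<partial>measure_pmf (lazy_walk t)) \<partial>count_space UNIV)"
    by (rule nn_integral_count_space_nn_integral) simp_all
  also have "\<dots> = (\<integral>\<^sup>+ z. (1 - Back t f z) \<partial>count_space UNIV)"
    by (simp only: pt)
  finally show ?thesis unfolding f_def .
qed

context refl
begin

lemma mem_sig_img: "y \<in> \<sigma> ` B \<longleftrightarrow> \<sigma> y \<in> B"
proof
  assume "y \<in> \<sigma> ` B" then obtain b where "b \<in> B" "y = \<sigma> b" by blast
  then show "\<sigma> y \<in> B" by simp
next
  assume "\<sigma> y \<in> B" then have "\<sigma> (\<sigma> y) \<in> \<sigma> ` B" by blast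
  then show "y \<in> \<sigma> ` B" by simp
qed

lemma S_tp: "S (\<lambda>w. indicator (- B) w) (\<lambda>w. indicator (- two_point \<sigma> H0 Hp Hm B) w)"
  unfolding S_def
proof (intro conjI allI ballI)
  fix z show "indicator (- B) z = (0::ennreal) \<or> indicator (- B) z = (1::ennreal)"
    by (auto simp: indicator_def)
next
  fix z assume z: "z \<in> H0"
  then have "z \<notin> Hp" "z \<notin> Hm" using disj by auto
  then have "z \<in> two_point \<sigma> H0 Hp Hm B \<longleftrightarrow> z \<in> B" using z by (auto simp: two_point_def)
  then show "(indicator (- two_point \<sigma> H0 Hp Hm B) z :: ennreal) = indicator (- B) z"
    by (simp add: indicator_def)
next
  fix x assume x: "x \<in> Hm"
  have sx: "\<sigma> x \<in> Hp" using x Hp_Hm by simp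
  have "x \<notin> Hp" "x \<notin> H0" using x disj by auto
  then have t1: "x \<in> two_point \<sigma> H0 Hp Hm B \<longleftrightarrow> x \<in> B \<and> \<sigma> x \<in> B"
    using x by (auto simp: two_point_def mem_sig_img)
  have "\<sigma> x \<notin> Hm" "\<sigma> x \<notin> H0" using sx disj by auto
  then have t2: "\<sigma> x \<in> two_point \<sigma> H0 Hp Hm B \<longleftrightarrow> \<sigma> x \<in> B \<or> x \<in> B"
    using sx by (auto simp: two_point_def mem_sig_img)
  show "(indicator (- two_point \<sigma> H0 Hp Hm B) x :: ennreal) = max (indicator (- B) x) (indicator (- B) (\<sigma> x))"
    using t1 by (auto simp: indicator_def)
  show "(indicator (- two_point \<sigma> H0 Hp Hm B) (\<sigma> x) :: ennreal) = min (indicator (- B) x) (indicator (- B) (\<sigma> x))"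
    using t2 by (auto simp: indicator_def)
qed

lemma final_cmp:
  assumes r: "R F G" and F1: "\<And>z. F z \<le> 1" and G1: "\<And>z. G z \<le> 1"
  shows "(\<integral>\<^sup>+ z. (1 - G z) \<partial>count_space UNIV) \<le> (\<integral>\<^sup>+ z. (1 - F z) \<partial>count_space UNIV)"
  unfolding split_sum[of "\<lambda>z. 1 - G z"] split_sum[of "\<lambda>z. 1 - F z"]
proof (intro nn_integral_mono)
  fix y
  show "indicator H0 y * (1 - G y) + indicator Hm y * (1 - G y + (1 - G (\<sigma> y)))
      \<le> indicator H0 y * (1 - F y) + indicator Hm y * (1 - F y + (1 - F (\<sigma> y)))"
  proof (rule ind_cases[of y])
    assume y: "y \<in> H0"
    then have "F y \<le> G y" using r unfolding R_def by blast
    then show ?thesis using y disj[of y] by (simp add: ennreal_minus_mono)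
  next
    assume y: "y \<in> Hm" "y \<notin> H0"
    then have "F y + F (\<sigma> y) \<le> G y + G (\<sigma> y)" using r unfolding R_def by blast
    then have "1 - G y + (1 - G (\<sigma> y)) \<le> 1 - F y + (1 - F (\<sigma> y))"
      by (intro ennreal_pair F1 G1)
    then show ?thesis using y by simp
  next
    assume "y \<notin> H0" "y \<notin> Hm" then show ?thesis by simp
  qed
qed

end

theorem lemma3p3:
  fixes D :: "nat \<Rightarrow> (int ^ 'd::finite) set"
    and \<sigma> :: "int ^ 'd \<Rightarrow> int ^ 'd"
    and H0 Hp Hm :: "(int ^ 'd) set"
    and t :: nat
  assumes "\<And>s. uminus ` D s = D s"
    and "is_reflection \<sigma> H0 Hp Hm"
  shows "(\<integral>\<^sup>+ X. vol (\<Union>s\<le>t. (\<lambda>y. X s + y) ` D s) \<partial>measure_pmf (lazy_walk t))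
       \<ge> (\<integral>\<^sup>+ X. vol (\<Union>s\<le>t. (\<lambda>y. X s + y) ` two_point \<sigma> H0 Hp Hm (D s)) \<partial>measure_pmf (lazy_walk t))"
proof -
  interpret refl \<sigma> H0 Hp Hm by (rule refl.intro) (rule assms(2))
  define f :: "nat \<Rightarrow> int^'d \<Rightarrow> ennreal" where "f = (\<lambda>s w. indicator (- D s) w)"
  define g :: "nat \<Rightarrow> int^'d \<Rightarrow> ennreal" where "g = (\<lambda>s w. indicator (- two_point \<sigma> H0 Hp Hm (D s)) w)"
  have S: "S (f s) (g s)" for s unfolding f_def g_def by (rule S_tp)
  have R: "R (Back t f) (Back t g)"
    by (rule Back_pres) (use S S_R in auto)
  have F1: "Back t f z \<le> 1" for z by (rule Back_le1) (simp add: f_def indicator_def)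
  have G1: "Back t g z \<le> 1" for z by (rule Back_le1) (simp add: g_def indicator_def)
  show ?thesis
    unfolding expect_eq f_def[symmetric] g_def[symmetric]
    using final_cmp[OF R F1 G1] by simp
qed



end
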